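(* Let $c>0$. A countable collection of languages $\mathcal{L}$ is generable in the limit with set-based lower density $c$ under finite noise and finite omissions (i.e., there is a set-based generator which, for every $K\in\mathcal{L}$ and every enumeration of $K$ with finite noise and finite omissions, outputs sets $A_n$ with $A_n\subseteq K$ for all sufficiently large $n$ and $\liminf_{n}\mu_{\rm low}(A_n,K)\ge c$) if and only if for all $L,L'\in\mathcal{L}$ with $|L\setminus L'|<\infty$ it holds that $\mu_{\rm low}(L,L')\ge c$.
   Context: The universe is $U=\mathbb{N}$ with its natural order. A language is an infinite subset of $U$; a collection is a countable family of languages. For $A,B\subseteq\mathbb{N}$ with $B=\{b_1<b_2<\cdots\}$, $\mu_{\rm low}(A,B)=\liminf_n\frac1n|A\cap\{b_1,\dots,b_n\}|$. An enumeration is a sequence of distinct elements of $U$; $S_n=\{x_1,\dots,x_n\}$. An enumeration of $K$ with finite noise and finite omissions is a sequence in which every element of some $\hat K\subseteq K$ with $|K\setminus\hat K|<\infty$ appears exactly once and only finitely many elements outside $\hat K$ appear. A set-based generator is a sequence of maps that, given $x_1,\dots,x_n$ (and knowledge of $\mathcal{L}$, not of $K$), outputs $A_n\subseteq U\setminus S_n$. *)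

theory Defs
  imports Main "HOL-Library.Infinite_Set" "HOL-Library.Countable_Set"
          "HOL-Library.Extended_Real" "HOL-Library.Liminf_Limsup"
begin

text \<open>Lower density of A relative to an (infinite) set B = {b_1 < b_2 < ...}:
  liminf_n (1/n) |A \<inter> {b_1,...,b_n}|.  Here enumerate B k is b_(k+1).\<close>
definition mu_low :: "nat set \<Rightarrow> nat set \<Rightarrow> ereal" where
  "mu_low A B = liminf (\<lambda>n::nat. ereal (real (card (A \<inter> enumerate B ` {..<Suc n})) / real (Suc n)))"

definition collection :: "nat set set \<Rightarrow> bool" where
  "collection Lc \<longleftrightarrow> countable Lc \<and> (\<forall>L\<in>Lc. infinite L)"

text \<open>x (x 0 = x_1, x 1 = x_2, ...) is an enumeration of K with finite noise and finite omissions: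
  a sequence of distinct elements in which every element of some cofinite subset Kh of K appears
  (exactly once, by distinctness) and only finitely many elements outside Kh appear.\<close>
definition noisy_enum :: "nat set \<Rightarrow> (nat \<Rightarrow> nat) \<Rightarrow> bool" where
  "noisy_enum K x \<longleftrightarrow> inj x \<and>
     (\<exists>Kh. Kh \<subseteq> K \<and> finite (K - Kh) \<and> Kh \<subseteq> range x \<and> finite (range x - Kh))"

definition set_generator :: "(nat list \<Rightarrow> nat set) \<Rightarrow> bool" where
  "set_generator G \<longleftrightarrow> (\<forall>xs. G xs \<inter> set xs = {})"

definition generable_low_density_noisy :: "nat set set \<Rightarrow> real \<Rightarrow> bool" where
  "generable_low_density_noisy Lc c \<longleftrightarrow>
     (\<exists>G. set_generator G \<and>
        (\<forall>K\<in>Lc. \<forall>x. noisy_enum K x \<longrightarrow>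
           (\<forall>\<^sub>F n in sequentially. G (map x [0..<n]) \<subseteq> K) \<and>
           liminf (\<lambda>n. mu_low (G (map x [0..<n])) K) \<ge> ereal c))"

end

theory Submission
  imports Defs
begin

lemma mu_low_mono:
  assumes "A \<subseteq> A'"
  shows "mu_low A B \<le> mu_low A' B"
  unfolding mu_low_def
proof (rule Liminf_mono, rule always_eventually, intro allI)
  fix n
  have "card (A \<inter> enumerate B ` {..<Suc n}) \<le> card (A' \<inter> enumerate B ` {..<Suc n})"
    using assms by (intro card_mono) auto
  then show "ereal (real (card (A \<inter> enumerate B ` {..<Suc n})) / real (Suc n))
      \<le> ereal (real (card (A' \<inter> enumerate B ` {..<Suc n})) / real (Suc n))"
    by (simp add: divide_right_mono)
qed

lemma mu_low_diff_finite:
  assumes "finite F"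
  shows "mu_low A B \<le> mu_low (A - F) B"
proof -
  define a where "a n = real (card (A \<inter> enumerate B ` {..<Suc n})) / real (Suc n)" for n
  define b where "b n = real (card ((A - F) \<inter> enumerate B ` {..<Suc n})) / real (Suc n)" for n
  have ab: "a n \<le> b n + real (card F) * inverse (real (Suc n))" for n
  proof -
    have "A \<inter> enumerate B ` {..<Suc n} \<subseteq> ((A - F) \<inter> enumerate B ` {..<Suc n}) \<union> F" by auto
    then have "card (A \<inter> enumerate B ` {..<Suc n}) \<le> card (((A - F) \<inter> enumerate B ` {..<Suc n}) \<union> F)"
      using assms by (intro card_mono) auto
    also have "\<dots> \<le> card ((A - F) \<inter> enumerate B ` {..<Suc n}) + card F" by (rule card_Un_le)
    finally have "real (card (A \<inter> enumerate B ` {..<Suc n})) \<le> real (card ((A - F) \<inter> enumerate B ` {..<Suc n})) + real (card F)"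
      by linarith
    then have "real (card (A \<inter> enumerate B ` {..<Suc n})) / real (Suc n) \<le> (real (card ((A - F) \<inter> enumerate B ` {..<Suc n})) + real (card F)) / real (Suc n)"
      by (intro divide_right_mono) auto
    moreover have "(real (card ((A - F) \<inter> enumerate B ` {..<Suc n})) + real (card F)) / real (Suc n) = b n + real (card F) * inverse (real (Suc n))"
      unfolding b_def by (simp add: divide_inverse distrib_right)
    ultimately show ?thesis unfolding a_def by simp
  qed
  have lim: "(\<lambda>n. real (card F) * inverse (real (Suc n))) \<longlonglongrightarrow> 0"
    using tendsto_mult_right_zero[OF LIMSEQ_inverse_real_of_nat] by simp
  show ?thesis
    unfolding mu_low_def a_def[symmetric] b_def[symmetric] liminf_bounded_iff
  proof (intro allI impI)
    fix y assume y: "y < liminf (\<lambda>n. ereal (a n))"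
    show "\<exists>N. \<forall>n\<ge>N. y < ereal (b n)"
    proof (cases y)
      case MInf then show ?thesis by auto
    next
      case PInf then show ?thesis using y by auto
    next
      case (real r)
      obtain y' where y': "y < y'" "y' < liminf (\<lambda>n. ereal (a n))" using y dense by blast
      then obtain r' where r': "y' = ereal r'" "r < r'" using real
        by (cases y') auto
      have "\<forall>\<^sub>F n in sequentially. ereal r' < ereal (a n)"
        using y' r' le_Liminf_iff[THEN iffD1, OF order_refl] by blast
      moreover have "\<forall>\<^sub>F n in sequentially. real (card F) * inverse (real (Suc n)) < r' - r"
        using order_tendstoD(2)[OF lim] r' by simp
      ultimately have "\<forall>\<^sub>F n in sequentially. y < ereal (b n)"
      proof eventually_elim
        case (elim n) then show ?case using ab[of n] real by simp
      qed
      then show ?thesis unfolding eventually_sequentially by blast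
    qed
  qed
qed

lemma liminf_freq_le:
  fixes g :: "nat \<Rightarrow> ereal"
  assumes "\<And>m. \<exists>n\<ge>m. g n \<le> a" and "a < c" and "c \<le> liminf g"
  shows False
proof -
  have "\<forall>\<^sub>F n in sequentially. a < g n" using assms(2,3) le_Liminf_iff by blast
  then obtain N where "\<forall>n\<ge>N. a < g n" unfolding eventually_sequentially by blast
  with assms(1)[of N] show False by force
qed

lemma card_filter_map:
  fixes x :: "nat \<Rightarrow> 'a"
  assumes "inj x"
  shows "length (filter P (map x [0..<n])) = card (x ` {..<n} \<inter> Collect P)"
proof -
  have "length (filter P (map x [0..<n])) = card {k. k < n \<and> P (x k)}"
    unfolding length_filter_conv_card by (rule arg_cong[where f=card]) auto
  also have "\<dots> = card (x ` {k. k < n \<and> P (x k)})"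
    using assms by (intro card_image[symmetric]) (simp add: inj_on_def)
  also have "x ` {k. k < n \<and> P (x k)} = x ` {..<n} \<inter> Collect P" by auto
  finally show ?thesis .
qed

lemma bounded_card_finite:
  fixes x :: "nat \<Rightarrow> 'a"
  assumes "\<And>n. card (x ` {..<n} - L) \<le> m"
  shows "finite (range x - L)"
proof (rule ccontr)
  assume "infinite (range x - L)"
  then obtain F where F: "finite F" "card F = Suc m" "F \<subseteq> range x - L"
    using infinite_arbitrarily_large by meson
  have "F \<subseteq> x ` UNIV" using F(3) by blast
  from finite_subset_image[OF F(1) this] obtain C where C: "finite C" "F = x ` C" by (elim exE conjE)
  then obtain N where N: "C \<subseteq> {..<N}" using finite_nat_bounded by blast
  have "F \<subseteq> x ` {..<N} - L" using C(2) F(3) N by blast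
  moreover have "finite (x ` {..<N} - L)" by simp
  ultimately have "card F \<le> card (x ` {..<N} - L)" by (intro card_mono)
  with assms[of N] F(2) show False by simp
qed

lemma necessity:
  assumes coll: "collection Lc" and gen: "generable_low_density_noisy Lc c"
    and L: "L \<in> Lc" and L': "L' \<in> Lc" and fin: "finite (L - L')"
  shows "ereal c \<le> mu_low L L'"
proof -
  obtain G where GP: "\<forall>K\<in>Lc. \<forall>x. noisy_enum K x \<longrightarrow>
           (\<forall>\<^sub>F n in sequentially. G (map x [0..<n]) \<subseteq> K) \<and>
           liminf (\<lambda>n. mu_low (G (map x [0..<n])) K) \<ge> ereal c"
    using gen unfolding generable_low_density_noisy_def by blast
  have infL: "infinite L" and infL': "infinite L'" using coll L L' unfolding collection_def by auto
  define D where "D = L \<inter> L'"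
  have "L \<subseteq> D \<union> (L - L')" unfolding D_def by blast
  then have infD: "infinite D" using infL fin finite_subset by blast
  have infDp: "infinite (D - set p)" for p :: "nat list"
    using infD by simp
  define cont where "cont p k = (if k < length p then p ! k else enumerate (D - set p) (k - length p))"
    for p :: "nat list" and k
  have cont_pre: "k < length p \<Longrightarrow> cont p k = p ! k" for p k unfolding cont_def by simp
  have cont_post: "cont p (length p + k) = enumerate (D - set p) k" for p k unfolding cont_def by simp
  have cont_in: "cont p k \<in> set p \<union> (D - set p)" for p k
    unfolding cont_def using enumerate_in_set[OF infDp[of p]] by auto
  have cont_inj: "inj (cont p)" if dp: "distinct p" for p
  proof (rule injI)
    fix a b assume eq: "cont p a = cont p b"
    show "a = b"
    proof (cases "a < length p")
      case True
      show ?thesis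
      proof (cases "b < length p")
        case True
        then show ?thesis using eq \<open>a < length p\<close> dp cont_pre nth_eq_iff_index_eq by metis
      next
        case False
        then have "cont p b \<in> D - set p" unfolding cont_def using enumerate_in_set[OF infDp[of p]] by auto
        moreover have "cont p a \<in> set p" using True cont_pre by simp
        ultimately show ?thesis using eq by simp
      qed
    next
      case False
      show ?thesis
      proof (cases "b < length p")
        case True
        then have "cont p b \<in> set p" using cont_pre by simp
        moreover have "cont p a \<in> D - set p" using False unfolding cont_def using enumerate_in_set[OF infDp[of p]] by auto
        ultimately show ?thesis using eq by simp
      next
        case F2: False
        then have "enumerate (D - set p) (a - length p) = enumerate (D - set p) (b - length p)"
          using eq False unfolding cont_def by simp
        then have "a - length p = b - length p" using inj_enumerate[OF infDp[of p]] by (simp add: inj_eq)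
        then show ?thesis using False F2 by simp
      qed
    qed
  qed
  have cont_cover: "D - set p \<subseteq> range (cont p)" for p
  proof
    fix y assume "y \<in> D - set p"
    then obtain k where "enumerate (D - set p) k = y" using enumerate_Ex[OF infDp[of p]] by blast
    then have "cont p (length p + k) = y" using cont_post by simp
    then show "y \<in> range (cont p)" by (metis rangeI)
  qed
  have cont_noisy: "noisy_enum L (cont p)" if dp: "distinct p" for p
    unfolding noisy_enum_def
  proof (intro conjI exI[of _ "D - set p"])
    show "inj (cont p)" using cont_inj dp .
    show "D - set p \<subseteq> L" unfolding D_def by blast
    have "L - (D - set p) \<subseteq> (L - L') \<union> set p" unfolding D_def by blast
    then show "finite (L - (D - set p))" using fin finite_subset by blast
    show "D - set p \<subseteq> range (cont p)" by (rule cont_cover)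
    have "range (cont p) - (D - set p) \<subseteq> set p" using cont_in by blast
    then show "finite (range (cont p) - (D - set p))" using finite_subset by blast
  qed
  have ex_n: "\<exists>n. length p \<le> n \<and> G (map (cont p) [0..<n]) \<subseteq> L" if dp: "distinct p" for p
  proof -
    have "\<forall>\<^sub>F n in sequentially. G (map (cont p) [0..<n]) \<subseteq> L"
      using GP L cont_noisy[OF dp] by blast
    then obtain N where N: "\<forall>n\<ge>N. G (map (cont p) [0..<n]) \<subseteq> L" unfolding eventually_sequentially by blast
    show ?thesis using N[rule_format, of "max N (length p)"] by (intro exI[of _ "max N (length p)"]) simp
  qed
  define nn where "nn p = (SOME n. length p \<le> n \<and> G (map (cont p) [0..<n]) \<subseteq> L)" for p
  define pref where "pref p = map (cont p) [0..<nn p]" for p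
  define zz where "zz p = enumerate L' (LEAST k. enumerate L' k \<notin> set (pref p))" for p
  define step where "step p = pref p @ [zz p]" for p
  define P where "P m = (step ^^ m) []" for m
  have nnP: "length p \<le> nn p \<and> G (pref p) \<subseteq> L" if dp: "distinct p" for p
    unfolding pref_def nn_def using someI_ex[OF ex_n[OF dp]] by simp
  have len_pre: "length (pref p) = nn p" for p by (simp add: pref_def)
  have pref_nth: "i < length p \<Longrightarrow> i < nn p \<Longrightarrow> pref p ! i = p ! i" for p i
    unfolding pref_def using cont_pre by simp
  have pref_take: "take (length p) (pref p) = p" if dp: "distinct p" for p
    using nnP[OF dp] pref_nth len_pre by (intro nth_equalityI) auto
  have pref_dist: "distinct (pref p)" if dp: "distinct p" for p
    unfolding pref_def using cont_inj[OF dp] by (simp add: distinct_map inj_on_def)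
  have pref_set: "set (pref p) \<subseteq> L'" if "set p \<subseteq> L'" for p
    unfolding pref_def using cont_in that unfolding D_def by fastforce
  have exk: "\<exists>k. enumerate L' k \<notin> set (pref p)" for p
  proof (rule ccontr)
    assume "\<not> ?thesis"
    then have "L' \<subseteq> set (pref p)" using enumerate_Ex[OF infL'] by blast
    then show False using infL' finite_subset by blast
  qed
  have zz_notin: "zz p \<notin> set (pref p)" for p
    unfolding zz_def using LeastI_ex[OF exk[of p]] .
  have zz_in: "zz p \<in> L'" for p
    unfolding zz_def using enumerate_in_set[OF infL'] .
  have inv_step: "distinct (step p) \<and> set (step p) \<subseteq> L'" if "distinct p" "set p \<subseteq> L'" for p
    unfolding step_def using pref_dist[OF that(1)] pref_set[OF that(2)] zz_notin zz_in by auto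
  have P_Suc: "P (Suc m) = step (P m)" for m unfolding P_def by simp
  have invP: "distinct (P m) \<and> set (P m) \<subseteq> L'" for m
    by (induction m) (auto simp: P_Suc P_def[of 0] intro!: inv_step)
  have len_step: "length (step p) = Suc (nn p)" for p by (simp add: step_def len_pre)
  have take_step: "take (length p) (step p) = p" if "distinct p" for p
    unfolding step_def using pref_take[OF that] nnP[OF that] len_pre by simp
  have lenP: "m \<le> length (P m)" for m
  proof (induction m)
    case (Suc m) then show ?case using nnP[of "P m"] invP[of m] len_step P_Suc by fastforce
  qed simp
  have lenP_mono: "length (P m) \<le> length (P (m + d))" for m d
  proof (induction d)
    case (Suc d) then show ?case using nnP[of "P (m+d)"] invP[of "m+d"] len_step[of "P (m+d)"] P_Suc[of "m+d"] by simp
  qed simp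
  have P_prefix: "take (length (P m)) (P (m + d)) = P m" for m d
  proof (induction d)
    case 0 then show ?case by simp
  next
    case (Suc d)
    have "take (length (P m)) (P (m + Suc d)) = take (length (P m)) (take (length (P (m+d))) (step (P (m+d))))"
      using lenP_mono[of m d] P_Suc[of "m+d"] by (simp add: min_def)
    also have "\<dots> = take (length (P m)) (P (m+d))" using take_step invP by simp
    finally show ?case using Suc by simp
  qed
  define x where "x k = P (Suc k) ! k" for k
  have x_nth: "x k = P m ! k" if k: "k < length (P m)" for k m
  proof -
    define M where "M = max m (Suc k)"
    have a: "P m = take (length (P m)) (P M)" using P_prefix[of m "M - m"] unfolding M_def by simp
    have b: "P (Suc k) = take (length (P (Suc k))) (P M)" using P_prefix[of "Suc k" "M - Suc k"] unfolding M_def by simp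
    have "k < length (P (Suc k))" using lenP[of "Suc k"] by simp
    then have "x k = P M ! k" unfolding x_def by (subst b) simp
    moreover have "P m ! k = P M ! k" using k by (subst a) simp
    ultimately show ?thesis by simp
  qed
  have map_x: "map x [0..<length (P m)] = P m" for m
    by (rule nth_equalityI) (auto simp: x_nth)
  have x_inj: "inj x"
  proof (rule injI)
    fix a b assume eq: "x a = x b"
    define m where "m = Suc (max a b)"
    have "a < length (P m)" "b < length (P m)" using lenP[of m] unfolding m_def by auto
    then show "a = b" using eq x_nth invP[of m] nth_eq_iff_index_eq by metis
  qed
  have cover: "\<forall>k<m. enumerate L' k \<in> set (P m)" for m
  proof (induction m)
    case 0 then show ?case by simp
  next
    case (Suc m)
    have sub: "set (P m) \<subseteq> set (pref (P m))"
      using pref_take[of "P m"] invP[of m] set_take_subset by metis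
    show ?case
    proof (intro allI impI)
      fix k assume "k < Suc m"
      show "enumerate L' k \<in> set (P (Suc m))"
      proof (cases "k < m")
        case True then show ?thesis using Suc sub P_Suc unfolding step_def by auto
      next
        case False
        then have km: "k = m" using \<open>k < Suc m\<close> by simp
        show ?thesis
        proof (cases "enumerate L' m \<in> set (pref (P m))")
          case True then show ?thesis using km P_Suc unfolding step_def by auto
        next
          case False
          define k0 where "k0 = (LEAST k. enumerate L' k \<notin> set (pref (P m)))"
          have "k0 \<le> m" unfolding k0_def using False by (rule Least_le)
          moreover have "\<not> k0 < m"
          proof
            assume "k0 < m"
            then have "enumerate L' k0 \<in> set (pref (P m))" using Suc sub by auto
            moreover have "enumerate L' k0 \<notin> set (pref (P m))" unfolding k0_def using LeastI_ex[OF exk] .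
            ultimately show False by simp
          qed
          ultimately have "k0 = m" by simp
          then have "zz (P m) = enumerate L' m" unfolding zz_def k0_def by simp
          then show ?thesis using km P_Suc unfolding step_def by simp
        qed
      qed
    qed
  qed
  have range_x: "range x = L'"
  proof
    show "range x \<subseteq> L'"
    proof
      fix y assume "y \<in> range x"
      then obtain k where "y = x k" by blast
      then have "y \<in> set (P (Suc k))" using lenP[of "Suc k"] unfolding x_def by simp
      then show "y \<in> L'" using invP by blast
    qed
    show "L' \<subseteq> range x"
    proof
      fix y assume "y \<in> L'"
      then obtain k where "enumerate L' k = y" using enumerate_Ex[OF infL'] by blast
      then have "y \<in> set (P (Suc k))" using cover by blast
      then have "y \<in> set (map x [0..<length (P (Suc k))])" using map_x by metis
      then show "y \<in> range x" by auto
    qed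
  qed
  have noisy: "noisy_enum L' x"
    unfolding noisy_enum_def using x_inj range_x by (intro conjI exI[of _ L']) auto
  have lim: "ereal c \<le> liminf (\<lambda>n. mu_low (G (map x [0..<n])) L')"
    using GP L' noisy by blast
  have freq: "\<exists>n\<ge>m. mu_low (G (map x [0..<n])) L' \<le> mu_low L L'" for m
  proof (intro exI conjI)
    have dm: "distinct (P m)" using invP by blast
    show "m \<le> nn (P m)" using lenP[of m] nnP[OF dm] by simp
    have "map x [0..<nn (P m)] = pref (P m)"
    proof (rule nth_equalityI)
      fix i assume "i < length (map x [0..<nn (P m)])"
      then have i: "i < nn (P m)" by simp
      then have "x i = P (Suc m) ! i" using len_step[of "P m"] P_Suc by (intro x_nth) simp
      also have "\<dots> = pref (P m) ! i" using P_Suc i len_pre unfolding step_def by (simp add: nth_append)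
      finally show "map x [0..<nn (P m)] ! i = pref (P m) ! i" using i by simp
    qed (simp add: len_pre)
    then have "G (map x [0..<nn (P m)]) \<subseteq> L" using nnP[OF dm] by simp
    then show "mu_low (G (map x [0..<nn (P m)])) L' \<le> mu_low L L'" by (rule mu_low_mono)
  qed
  show ?thesis
  proof (rule ccontr)
    assume "\<not> ereal c \<le> mu_low L L'"
    then have "mu_low L L' < ereal c" by simp
    from liminf_freq_le[OF freq this lim] show False .
  qed
qed

lemma sufficiency:
  assumes coll: "collection Lc"
    and H: "\<forall>L\<in>Lc. \<forall>L'\<in>Lc. finite (L - L') \<longrightarrow> mu_low L L' \<ge> ereal c"
  shows "generable_low_density_noisy Lc c"
proof (cases "Lc = {}")
  case True
  show ?thesis unfolding generable_low_density_noisy_def set_generator_def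
    by (rule exI[of _ "\<lambda>_. {}"]) (simp add: True)
next
  case nonempty: False
  define f where "f = from_nat_into Lc"
  have f_in: "f i \<in> Lc" for i unfolding f_def using from_nat_into[OF nonempty] .
  define lang where "lang q = f (fst (prod_decode q))" for q
  define bud where "bud q = snd (prod_decode q)" for q
  have lang_in: "lang q \<in> Lc" for q unfolding lang_def using f_in .
  define pl where "pl xs q \<longleftrightarrow> q < length xs \<and> length (filter (\<lambda>y. y \<notin> lang q) xs) \<le> bud q"
    for xs :: "nat list" and q
  define crit where "crit xs q \<longleftrightarrow> pl xs q \<and> (\<forall>q'<q. pl xs q' \<longrightarrow> finite (lang q - lang q'))"
    for xs q
  define G where "G xs = (if \<exists>q. crit xs q
      then (\<Inter>q'\<in>{q'. q' \<le> (GREATEST q. crit xs q) \<and> pl xs q'}. lang q') - set xs else {})" for xs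
  show ?thesis
    unfolding generable_low_density_noisy_def
  proof (intro exI[of _ G] conjI ballI allI impI)
    show "set_generator G" unfolding set_generator_def G_def by auto
  next
    fix K x assume K: "K \<in> Lc" and nx: "noisy_enum K x"
    from nx obtain Kh where x_inj: "inj x" and Kh: "Kh \<subseteq> K" "finite (K - Kh)" "Kh \<subseteq> range x"
      "finite (range x - Kh)" unfolding noisy_enum_def by blast
    obtain j where fj: "f j = K" unfolding f_def using from_nat_into_surj[of Lc K] coll K
      unfolding collection_def by blast
    have finxK: "finite (range x - K)" using Kh finite_subset[of "range x - K" "range x - Kh"] by blast
    define M where "M = card (range x - K)"
    define qs where "qs = prod_encode (j, M)"
    have lang_qs: "lang qs = K" unfolding lang_def qs_def using fj by simp
    have bud_qs: "bud qs = M" unfolding bud_def qs_def by simp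
    have cnt: "length (filter (\<lambda>y. y \<notin> S) (map x [0..<n])) = card (x ` {..<n} - S)" for S n
    proof -
      have "x ` {..<n} \<inter> Collect (\<lambda>y. y \<notin> S) = x ` {..<n} - S" by blast
      then show ?thesis using card_filter_map[OF x_inj, of "\<lambda>y. y \<notin> S" n] by simp
    qed
    have plqs: "pl (map x [0..<n]) qs" if "qs < n" for n
    proof -
      have "card (x ` {..<n} - K) \<le> M" unfolding M_def using finxK by (intro card_mono) auto
      then show ?thesis unfolding pl_def using that cnt lang_qs bud_qs by simp
    qed
    have ev1: "\<forall>\<^sub>F n in sequentially. \<not> pl (map x [0..<n]) q' \<or> finite (K - lang q')" for q'
    proof (cases "\<exists>n0. bud q' < card (x ` {..<n0} - lang q')")
      case True
      then obtain n0 where n0: "bud q' < card (x ` {..<n0} - lang q')" by blast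
      have "\<not> pl (map x [0..<n]) q'" if "n \<ge> n0" for n
      proof -
        have "card (x ` {..<n0} - lang q') \<le> card (x ` {..<n} - lang q')"
          using that by (intro card_mono) auto
        then show ?thesis unfolding pl_def using n0 cnt by simp
      qed
      then show ?thesis unfolding eventually_sequentially by blast
    next
      case False
      then have "finite (range x - lang q')"
        by (intro bounded_card_finite[of x "lang q'" "bud q'"]) (simp add: not_less)
      moreover have "K - lang q' \<subseteq> (K - Kh) \<union> (range x - lang q')" using Kh by blast
      ultimately have "finite (K - lang q')" using Kh(2) finite_subset by blast
      then show ?thesis by simp
    qed
    have ev: "\<forall>\<^sub>F n in sequentially. qs < n \<and> (\<forall>q'\<in>{..<qs}. \<not> pl (map x [0..<n]) q' \<or> finite (K - lang q'))"
      using eventually_gt_at_top[of qs] eventually_ball_finite[of "{..<qs}", OF _ ballI[OF ev1]]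
      by (auto intro: eventually_conj)
    have main: "\<forall>\<^sub>F n in sequentially. G (map x [0..<n]) \<subseteq> K \<and> ereal c \<le> mu_low (G (map x [0..<n])) K"
      using ev
    proof eventually_elim
      case (elim n)
      define xs where "xs = map x [0..<n]"
      have cqs: "crit xs qs" unfolding crit_def xs_def
        using plqs elim lang_qs by auto
      have bnd: "\<And>y. crit xs y \<Longrightarrow> y \<le> n" unfolding crit_def pl_def xs_def by simp
      define q0 where "q0 = (GREATEST q. crit xs q)"
      have cq0: "crit xs q0" unfolding q0_def using GreatestI_nat[where P="crit xs", OF cqs bnd] .
      have qs_le: "qs \<le> q0" unfolding q0_def using Greatest_le_nat[where P="crit xs", OF cqs bnd] .
      define I where "I = {q'. q' \<le> q0 \<and> pl xs q'}"
      have Gx: "G xs = (\<Inter>q'\<in>I. lang q') - set xs" unfolding G_def I_def q0_def using cqs by auto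
      have qsI: "qs \<in> I" unfolding I_def using qs_le cqs crit_def by simp
      have sub: "G xs \<subseteq> K" using Gx qsI lang_qs by blast
      have finI: "finite I" unfolding I_def by simp
      define F where "F = (\<Union>q'\<in>I. lang q0 - lang q') \<union> set xs"
      have finF: "finite F" unfolding F_def
      proof (intro finite_UnI finite_UN_I finI)
        fix q' assume "q' \<in> I"
        then show "finite (lang q0 - lang q')"
          using cq0 unfolding I_def crit_def by (cases "q' = q0") auto
      qed simp
      have "lang q0 - F \<subseteq> G xs" unfolding Gx F_def by blast
      then have "mu_low (lang q0 - F) K \<le> mu_low (G xs) K" by (rule mu_low_mono)
      moreover have "mu_low (lang q0) K \<le> mu_low (lang q0 - F) K" using finF by (rule mu_low_diff_finite)
      moreover have "finite (lang q0 - K)"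
      proof (cases "q0 = qs")
        case True then show ?thesis using lang_qs by simp
      next
        case False
        then have "qs < q0" using qs_le by simp
        then show ?thesis using cq0 cqs lang_qs unfolding crit_def by auto
      qed
      then have "ereal c \<le> mu_low (lang q0) K" using H lang_in K by blast
      ultimately show ?case using sub xs_def by auto
    qed
    show "\<forall>\<^sub>F n in sequentially. G (map x [0..<n]) \<subseteq> K" using main by (rule eventually_mono) simp
    show "ereal c \<le> liminf (\<lambda>n. mu_low (G (map x [0..<n])) K)"
      by (rule Liminf_bounded) (use main in \<open>rule eventually_mono\<close>, simp)
  qed
qed

theorem theorem6p5:
  fixes Lc :: "nat set set" and c :: real
  assumes "collection Lc" and "c > 0"
  shows "generable_low_density_noisy Lc c \<longleftrightarrow>
         (\<forall>L\<in>Lc. \<forall>L'\<in>Lc. finite (L - L') \<longrightarrow> mu_low L L' \<ge> ereal c)"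
  using necessity[OF assms(1)] sufficiency[OF assms(1)] by blast

end
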